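(* Every unit interval graph has twin-width at most $2$.
   Context: A unit interval graph is the intersection graph of a finite family of closed intervals of the real line all having the same length. A trigraph $H$ consists of a vertex set $V(H)$ and two disjoint sets of unordered pairs of distinct vertices: black edges $E(H)$ and red edges $R(H)$. Two vertices are adjacent (neighbors) if they are joined by a black or a red edge. The red graph of $H$ is the graph $(V(H),R(H))$; $H$ is a $d$-trigraph if its red graph has maximum degree at most $d$. A graph is a trigraph with no red edges. Contracting two distinct vertices $u,v$ of a trigraph $H$ yields the trigraph obtained by deleting $u$ and $v$ and adding a new vertex $z$ such that, for every other vertex $x$: $zx$ is a black edge if both $ux$ and $vx$ are black edges; $zx$ is not an edge if $x$ is adjacent to neither $u$ nor $v$; and $zx$ is a red edge otherwise. All edges not incident to $u$ or $v$ are unchanged. A $d$-sequence of an $n$-vertex graph $G$ is a sequence of $d$-trigraphs $G=G_n,G_{n-1},\dots,G_1$ such that $G_1$ has a single vertex and each $G_{i-1}$ is obtained from $G_i$ by one contraction (so $G_i$ has $i$ vertices). The twin-width $\mathrm{tww}(G)$ of $G$ is the minimum $d$ such that $G$ admits a $d$-sequence. *)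

theory Defs
  imports Complex_Main
begin

text \<open>A trigraph is a triple (V, B, R): a vertex set, black edges and red edges;
  edges are unordered pairs of distinct vertices, represented as 2-element sets.\<close>
type_synonym 'a trigraph = "'a set \<times> 'a set set \<times> 'a set set"

definition verts :: "'a trigraph \<Rightarrow> 'a set" where "verts H = fst H"
definition black :: "'a trigraph \<Rightarrow> 'a set set" where "black H = fst (snd H)"
definition red :: "'a trigraph \<Rightarrow> 'a set set" where "red H = snd (snd H)"

definition wf_trigraph :: "'a trigraph \<Rightarrow> bool" where
  "wf_trigraph H \<longleftrightarrow> finite (verts H)
     \<and> (\<forall>e \<in> black H \<union> red H. e \<subseteq> verts H \<and> card e = 2)
     \<and> black H \<inter> red H = {}"

definition is_graph :: "'a trigraph \<Rightarrow> bool" where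
  "is_graph G \<longleftrightarrow> wf_trigraph G \<and> red G = {}"

definition adjacent :: "'a trigraph \<Rightarrow> 'a \<Rightarrow> 'a \<Rightarrow> bool" where
  "adjacent H x y \<longleftrightarrow> {x, y} \<in> black H \<union> red H"

definition red_degree :: "'a trigraph \<Rightarrow> 'a \<Rightarrow> nat" where
  "red_degree H x = card {y \<in> verts H. {x, y} \<in> red H}"

definition is_d_trigraph :: "nat \<Rightarrow> 'a trigraph \<Rightarrow> bool" where
  "is_d_trigraph d H \<longleftrightarrow> wf_trigraph H \<and> (\<forall>x \<in> verts H. red_degree H x \<le> d)"

text \<open>Contract u and v into the vertex z (z must not be another vertex of H).\<close>
definition contract :: "'a trigraph \<Rightarrow> 'a \<Rightarrow> 'a \<Rightarrow> 'a \<Rightarrow> 'a trigraph" where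
  "contract H u v z =
    (let W = verts H - {u, v} in
     (W \<union> {z},
      {e \<in> black H. e \<subseteq> W} \<union>
        {{z, x} | x. x \<in> W \<and> {u, x} \<in> black H \<and> {v, x} \<in> black H},
      {e \<in> red H. e \<subseteq> W} \<union>
        {{z, x} | x. x \<in> W \<and> (adjacent H u x \<or> adjacent H v x)
                      \<and> \<not> ({u, x} \<in> black H \<and> {v, x} \<in> black H)}))"

definition contraction_step :: "'a trigraph \<Rightarrow> 'a trigraph \<Rightarrow> bool" where
  "contraction_step H H' \<longleftrightarrow>
     (\<exists>u v z. u \<in> verts H \<and> v \<in> verts H \<and> u \<noteq> v \<and> z \<notin> verts H - {u, v}
        \<and> H' = contract H u v z)"

text \<open>A d-sequence G = G_n, ..., G_1 is the list Hs with Hs!0 = G_n = G, ..., Hs!(n-1) = G_1.\<close>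
definition is_d_sequence :: "nat \<Rightarrow> 'a trigraph \<Rightarrow> 'a trigraph list \<Rightarrow> bool" where
  "is_d_sequence d G Hs \<longleftrightarrow>
     length Hs = card (verts G) \<and> Hs \<noteq> [] \<and> Hs ! 0 = G
     \<and> (\<forall>i < length Hs. is_d_trigraph d (Hs ! i))
     \<and> card (verts (last Hs)) = 1
     \<and> (\<forall>i. Suc i < length Hs \<longrightarrow> contraction_step (Hs ! i) (Hs ! Suc i))"

definition twin_width :: "'a trigraph \<Rightarrow> nat" where
  "twin_width G = (LEAST d. \<exists>Hs. is_d_sequence d G Hs)"

definition unit_interval_graph :: "'a trigraph \<Rightarrow> bool" where
  "unit_interval_graph G \<longleftrightarrow> is_graph G \<and> verts G \<noteq> {} \<and>
     (\<exists>(a :: 'a \<Rightarrow> real) (l :: real). l \<ge> 0 \<and>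
        (\<forall>x \<in> verts G. \<forall>y \<in> verts G. x \<noteq> y \<longrightarrow>
           ({x, y} \<in> black G \<longleftrightarrow> {a x .. a x + l} \<inter> {a y .. a y + l} \<noteq> {})))"

end

theory Submission
  imports Defs
begin


definition mk :: "'a set \<Rightarrow> ('a\<Rightarrow>'a\<Rightarrow>bool) \<Rightarrow> ('a\<Rightarrow>'a\<Rightarrow>bool) \<Rightarrow> 'a trigraph" where
 "mk W B R = (W, {{p,q}|p q. p\<in>W \<and> q\<in>W \<and> p\<noteq>q \<and> B p q}, {{p,q}|p q. p\<in>W \<and> q\<in>W \<and> p\<noteq>q \<and> R p q})"

definition symm :: "('a\<Rightarrow>'a\<Rightarrow>bool) \<Rightarrow> bool" where "symm B \<longleftrightarrow> (\<forall>p q. B p q = B q p)"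

lemma verts_mk[simp]: "verts (mk W B R) = W" by (simp add: mk_def verts_def)
lemma black_mk: "black (mk W B R) = {{p,q}|p q. p\<in>W \<and> q\<in>W \<and> p\<noteq>q \<and> B p q}"
  by (simp add: mk_def black_def)
lemma red_mk: "red (mk W B R) = {{p,q}|p q. p\<in>W \<and> q\<in>W \<and> p\<noteq>q \<and> R p q}"
  by (simp add: mk_def red_def)

lemma mem_black_mk: "symm B \<Longrightarrow> {p,q} \<in> black (mk W B R) \<longleftrightarrow> p\<in>W \<and> q\<in>W \<and> p\<noteq>q \<and> B p q"
  unfolding black_mk symm_def by (auto simp: doubleton_eq_iff)
lemma mem_red_mk: "symm R \<Longrightarrow> {p,q} \<in> red (mk W B R) \<longleftrightarrow> p\<in>W \<and> q\<in>W \<and> p\<noteq>q \<and> R p q"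
  unfolding red_mk symm_def by (auto simp: doubleton_eq_iff)

lemma mk_cong:
  assumes "W = W'" "\<And>p q. p\<in>W \<Longrightarrow> q\<in>W \<Longrightarrow> p\<noteq>q \<Longrightarrow> B p q = B' p q"
    "\<And>p q. p\<in>W \<Longrightarrow> q\<in>W \<Longrightarrow> p\<noteq>q \<Longrightarrow> R p q = R' p q"
  shows "mk W B R = mk W' B' R'"
proof -
  have 1: "{{p,q}|p q. p\<in>W \<and> q\<in>W \<and> p\<noteq>q \<and> B p q} = {{p,q}|p q. p\<in>W \<and> q\<in>W \<and> p\<noteq>q \<and> B' p q}"
    using assms(2) by blast
  have 2: "{{p,q}|p q. p\<in>W \<and> q\<in>W \<and> p\<noteq>q \<and> R p q} = {{p,q}|p q. p\<in>W \<and> q\<in>W \<and> p\<noteq>q \<and> R' p q}"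
    using assms(3) by blast
  show ?thesis unfolding mk_def using 1 2 assms(1) by simp
qed

lemma wf_mk:
  assumes "finite W" "symm B" "symm R" "\<And>p q. B p q \<Longrightarrow> \<not> R p q"
  shows "wf_trigraph (mk W B R)"
  unfolding wf_trigraph_def
proof (intro conjI)
  show "finite (verts (mk W B R))" using assms by simp
  show "\<forall>e\<in>black (mk W B R) \<union> red (mk W B R). e \<subseteq> verts (mk W B R) \<and> card e = 2"
    unfolding black_mk red_mk by auto
  show "black (mk W B R) \<inter> red (mk W B R) = {}"
  proof (rule ccontr)
    assume "black (mk W B R) \<inter> red (mk W B R) \<noteq> {}"
    then obtain p q p' q' where e: "{p,q} = {p',q'}" "B p q" "R p' q'" unfolding black_mk red_mk by blast
    have "R p q" using e(1,3) assms(3) unfolding symm_def doubleton_eq_iff by metis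
    then show False using e(2) assms(4) by blast
  qed
qed

lemma adjacent_mk: "symm B \<Longrightarrow> symm R \<Longrightarrow> adjacent (mk W B R) p q \<longleftrightarrow> p\<in>W \<and> q\<in>W \<and> p\<noteq>q \<and> (B p q \<or> R p q)"
  unfolding adjacent_def using mem_black_mk[of B p q W R] mem_red_mk[of R p q W B] by auto

definition Bm where "Bm u v B p q = (if p = u then B u q \<and> B v q else if q = u then B u p \<and> B v p else B p q)"
definition Rm where "Rm u v B R p q = (if p = u then (B u q \<or> R u q \<or> B v q \<or> R v q) \<and> \<not> (B u q \<and> B v q)
   else if q = u then (B u p \<or> R u p \<or> B v p \<or> R v p) \<and> \<not> (B u p \<and> B v p) else R p q)"

lemma contract_mk:
  assumes sB: "symm B" and sR: "symm R" and "u\<in>W" "v\<in>W" "u\<noteq>v"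
  shows "contract (mk W B R) u v u = mk ((W - {u,v}) \<union> {u}) (Bm u v B) (Rm u v B R)"
proof -
  let ?H = "mk W B R"
  let ?W0 = "W - {u,v}"
  have b: "{e \<in> black ?H. e \<subseteq> ?W0} \<union> {{u, x} | x. x \<in> ?W0 \<and> {u, x} \<in> black ?H \<and> {v, x} \<in> black ?H}
      = {{p,q}|p q. p\<in>?W0 \<union> {u} \<and> q\<in>?W0 \<union> {u} \<and> p\<noteq>q \<and> Bm u v B p q}" (is "?Lb = ?Rb")
  proof
    show "?Lb \<subseteq> ?Rb"
    proof
      fix e assume "e \<in> ?Lb"
      then consider (a) "e \<in> black ?H" "e \<subseteq> ?W0" | (b) x where "e = {u,x}" "x \<in> ?W0" "{u, x} \<in> black ?H" "{v, x} \<in> black ?H"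
        by blast
      then show "e \<in> ?Rb"
      proof cases
        case a
        then obtain p q where "e = {p,q}" "p\<in>W" "q\<in>W" "p\<noteq>q" "B p q" unfolding black_mk by blast
        then show ?thesis using a(2) by (auto simp: Bm_def)
      next
        case b
        then have "B u x" "B v x" using mem_black_mk[OF sB] by auto
        then show ?thesis using b(1,2) by (auto simp: Bm_def)
      qed
    qed
    show "?Rb \<subseteq> ?Lb"
    proof
      fix e assume "e \<in> ?Rb"
      then obtain p q where e: "e = {p,q}" "p\<in>?W0 \<union> {u}" "q\<in>?W0 \<union> {u}" "p\<noteq>q" "Bm u v B p q" by blast
      show "e \<in> ?Lb"
      proof (cases "p = u")
        case True
        then have "q \<in> ?W0" "B u q" "B v q" using e by (auto simp: Bm_def)
        then show ?thesis using e True mem_black_mk[OF sB, of _ _ W R] assms by auto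
      next
        case pu: False
        show ?thesis
        proof (cases "q = u")
          case True
          then have "p \<in> ?W0" "B u p" "B v p" using e pu by (auto simp: Bm_def)
          then have "{u,p} \<in> ?Lb" using mem_black_mk[OF sB, of _ _ W R] assms by auto
          then show ?thesis using e True by (simp add: insert_commute)
        next
          case False
          then have "p \<in> ?W0" "q \<in> ?W0" "B p q" using e pu by (auto simp: Bm_def)
          then have "e \<in> black ?H" using e mem_black_mk[OF sB, of _ _ W R] by auto
          then show ?thesis using e \<open>p \<in> ?W0\<close> \<open>q \<in> ?W0\<close> by auto
        qed
      qed
    qed
  qed
  have r: "{e \<in> red ?H. e \<subseteq> ?W0} \<union> {{u, x} | x. x \<in> ?W0 \<and> (adjacent ?H u x \<or> adjacent ?H v x)
                      \<and> \<not> ({u, x} \<in> black ?H \<and> {v, x} \<in> black ?H)}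
      = {{p,q}|p q. p\<in>?W0 \<union> {u} \<and> q\<in>?W0 \<union> {u} \<and> p\<noteq>q \<and> Rm u v B R p q}" (is "?Lr = ?Rr")
  proof
    show "?Lr \<subseteq> ?Rr"
    proof
      fix e assume "e \<in> ?Lr"
      then consider (a) "e \<in> red ?H" "e \<subseteq> ?W0" | (b) x where "e = {u,x}" "x \<in> ?W0" "adjacent ?H u x \<or> adjacent ?H v x"
            "\<not> ({u, x} \<in> black ?H \<and> {v, x} \<in> black ?H)"
        by blast
      then show "e \<in> ?Rr"
      proof cases
        case a
        then obtain p q where "e = {p,q}" "p\<in>W" "q\<in>W" "p\<noteq>q" "R p q" unfolding red_mk by blast
        then show ?thesis using a(2) by (auto simp: Rm_def)
      next
        case b
        then have "(B u x \<or> R u x \<or> B v x \<or> R v x) \<and> \<not> (B u x \<and> B v x)"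
          using mem_black_mk[OF sB] adjacent_mk[OF sB sR] assms by auto
        then show ?thesis using b(1,2) by (auto simp: Rm_def)
      qed
    qed
    show "?Rr \<subseteq> ?Lr"
    proof
      fix e assume "e \<in> ?Rr"
      then obtain p q where e: "e = {p,q}" "p\<in>?W0 \<union> {u}" "q\<in>?W0 \<union> {u}" "p\<noteq>q" "Rm u v B R p q" by blast
      show "e \<in> ?Lr"
      proof (cases "p = u")
        case True
        then have "q \<in> ?W0" "(B u q \<or> R u q \<or> B v q \<or> R v q) \<and> \<not> (B u q \<and> B v q)" using e by (auto simp: Rm_def)
        then show ?thesis using e True mem_black_mk[OF sB, of _ _ W R] adjacent_mk[OF sB sR, of W] assms by auto
      next
        case pu: False
        show ?thesis
        proof (cases "q = u")
          case True
          then have "p \<in> ?W0" "(B u p \<or> R u p \<or> B v p \<or> R v p) \<and> \<not> (B u p \<and> B v p)" using e pu by (auto simp: Rm_def)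
          then have "{u,p} \<in> ?Lr" using mem_black_mk[OF sB, of _ _ W R] adjacent_mk[OF sB sR, of W] assms by auto
          then show ?thesis using e True by (simp add: insert_commute)
        next
          case False
          then have "p \<in> ?W0" "q \<in> ?W0" "R p q" using e pu by (auto simp: Rm_def)
          then have "e \<in> red ?H" using e mem_red_mk[OF sR, of _ _ W B] by auto
          then show ?thesis using e \<open>p \<in> ?W0\<close> \<open>q \<in> ?W0\<close> by auto
        qed
      qed
    qed
  qed
  have "contract ?H u v u = (?W0 \<union> {u}, ?Lb, ?Lr)"
    unfolding contract_def Let_def verts_mk by (rule refl)
  also have "\<dots> = (?W0 \<union> {u}, ?Rb, ?Rr)" by (simp only: b r)
  also have "\<dots> = mk ((W - {u,v}) \<union> {u}) (Bm u v B) (Rm u v B R)" unfolding mk_def by (rule refl)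
  finally show ?thesis .
qed


definition ADJ :: "'a set \<Rightarrow> 'a set set \<Rightarrow> ('a \<Rightarrow> 'a) \<Rightarrow> 'a \<Rightarrow> 'a \<Rightarrow> bool" where
  "ADJ V E f p q \<longleftrightarrow> (\<exists>x\<in>V. \<exists>y\<in>V. f x = p \<and> f y = q \<and> {x,y} \<in> E)"
definition BL :: "'a set \<Rightarrow> 'a set set \<Rightarrow> ('a \<Rightarrow> 'a) \<Rightarrow> 'a \<Rightarrow> 'a \<Rightarrow> bool" where
  "BL V E f p q \<longleftrightarrow> (\<forall>x\<in>V. \<forall>y\<in>V. f x = p \<longrightarrow> f y = q \<longrightarrow> {x,y} \<in> E)"
definition RD where "RD V E f p q \<longleftrightarrow> ADJ V E f p q \<and> \<not> BL V E f p q"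
definition Q :: "'a set \<Rightarrow> 'a set set \<Rightarrow> ('a \<Rightarrow> 'a) \<Rightarrow> 'a trigraph" where
  "Q V E f = mk (f ` V) (BL V E f) (RD V E f)"

lemma symm_BL: "symm (BL V E f)" unfolding symm_def BL_def by (metis (no_types) insert_commute)
lemma symm_ADJ: "symm (ADJ V E f)" unfolding symm_def ADJ_def by (metis (no_types) insert_commute)
lemma symm_RD: "symm (RD V E f)" using symm_BL symm_ADJ unfolding symm_def RD_def by metis

lemma wf_Q: "finite V \<Longrightarrow> wf_trigraph (Q V E f)"
  unfolding Q_def by (rule wf_mk) (auto simp: symm_BL symm_RD RD_def)

lemma verts_Q[simp]: "verts (Q V E f) = f ` V" by (simp add: Q_def)

lemma mem_red_Q: "{p,q} \<in> red (Q V E f) \<longleftrightarrow> p \<in> f ` V \<and> q \<in> f ` V \<and> p \<noteq> q \<and> ADJ V E f p q \<and> \<not> BL V E f p q"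
  unfolding Q_def using mem_red_mk[OF symm_RD, of p q "f ` V" "BL V E f"] by (simp add: RD_def)

lemma Q_cong: assumes "\<And>x. x \<in> V \<Longrightarrow> f x = g x" shows "Q V E f = Q V E g"
proof -
  have "f ` V = g ` V" using assms by auto
  moreover have "BL V E f = BL V E g" unfolding BL_def using assms by (intro ext) auto
  moreover have "ADJ V E f = ADJ V E g" unfolding ADJ_def using assms by (intro ext) auto
  ultimately show ?thesis unfolding Q_def RD_def by simp
qed

lemma BL_ADJ: "p \<in> f ` V \<Longrightarrow> q \<in> f ` V \<Longrightarrow> BL V E f p q \<Longrightarrow> ADJ V E f p q"
  unfolding BL_def ADJ_def by blast

lemma BL_mu: assumes "\<And>y. g y = u \<longleftrightarrow> f y = u \<or> f y = v" "\<And>y. g y = q \<longleftrightarrow> f y = q"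
  shows "BL V E g u q \<longleftrightarrow> BL V E f u q \<and> BL V E f v q"
  unfolding BL_def using assms by auto
lemma ADJ_mu: assumes "\<And>y. g y = u \<longleftrightarrow> f y = u \<or> f y = v" "\<And>y. g y = q \<longleftrightarrow> f y = q"
  shows "ADJ V E g u q \<longleftrightarrow> ADJ V E f u q \<or> ADJ V E f v q"
  unfolding ADJ_def using assms by auto
lemma BL_mo: assumes "\<And>y. g y = p \<longleftrightarrow> f y = p" "\<And>y. g y = q \<longleftrightarrow> f y = q"
  shows "BL V E g p q \<longleftrightarrow> BL V E f p q"
  unfolding BL_def using assms by auto
lemma ADJ_mo: assumes "\<And>y. g y = p \<longleftrightarrow> f y = p" "\<And>y. g y = q \<longleftrightarrow> f y = q"
  shows "ADJ V E g p q \<longleftrightarrow> ADJ V E f p q"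
  unfolding ADJ_def using assms by auto
lemma prop_m: "(Bg = (Bu \<and> Bv)) \<Longrightarrow> (Ag = (Au \<or> Av)) \<Longrightarrow> (Bu \<Longrightarrow> Au) \<Longrightarrow> (Bv \<Longrightarrow> Av) \<Longrightarrow>
  Bg = (Bu \<and> Bv) \<and> (Ag \<and> \<not> Bg) = ((Bu \<or> (Au \<and> \<not> Bu) \<or> Bv \<or> (Av \<and> \<not> Bv)) \<and> \<not> (Bu \<and> Bv))"
  by auto

lemma Q_merge:
  assumes "u \<in> f ` V" "v \<in> f ` V" "u \<noteq> v"
  shows "contract (Q V E f) u v u = Q V E (\<lambda>y. if f y = v then u else f y)"
proof -
  define g where "g = (\<lambda>y. if f y = v then u else f y)"
  have img: "g ` V = (f ` V - {u,v}) \<union> {u}" using assms unfolding g_def by auto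
  have fu: "\<And>y. g y = u \<longleftrightarrow> f y = u \<or> f y = v"
    using assms(3) unfolding g_def by auto
  have fo: "\<And>y. g y = p \<longleftrightarrow> f y = p" if "p \<noteq> u" "p \<noteq> v" for p
    using that unfolding g_def by auto
  have ifu: "\<And>a b. (if u = u then a else b) = a" by simp
  have eqs: "BL V E g p q = Bm u v (BL V E f) p q \<and> RD V E g p q = Rm u v (BL V E f) (RD V E f) p q"
    if pq: "p \<in> g ` V" "q \<in> g ` V" "p \<noteq> q" for p q
  proof -
    have p': "p \<in> (f ` V - {u,v}) \<union> {u}" "q \<in> (f ` V - {u,v}) \<union> {u}" using pq(1,2) unfolding img .
    have pv: "p \<noteq> v" "q \<noteq> v" using p' assms(3) by blast+
    have pf: "p \<in> f ` V" "q \<in> f ` V" using p' assms(1) by blast+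
    show ?thesis
    proof (cases "p = u")
      case True
      then have qu: "q \<noteq> u" using pq by simp
      have m: "BL V E g u q = Bm u v (BL V E f) u q \<and> RD V E g u q = Rm u v (BL V E f) (RD V E f) u q"
        unfolding Bm_def Rm_def RD_def ifu
        by (rule prop_m[OF BL_mu[OF fu fo[OF qu pv(2)]] ADJ_mu[OF fu fo[OF qu pv(2)]]
              BL_ADJ[OF assms(1) pf(2)] BL_ADJ[OF assms(2) pf(2)]])
      show ?thesis using m True by simp
    next
      case pu: False
      show ?thesis
      proof (cases "q = u")
        case True
        have m: "BL V E g u p = Bm u v (BL V E f) u p \<and> RD V E g u p = Rm u v (BL V E f) (RD V E f) u p"
          unfolding Bm_def Rm_def RD_def ifu
          by (rule prop_m[OF BL_mu[OF fu fo[OF pu pv(1)]] ADJ_mu[OF fu fo[OF pu pv(1)]]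
              BL_ADJ[OF assms(1) pf(1)] BL_ADJ[OF assms(2) pf(1)]])
        have s1: "BL V E g p q = BL V E g q p" "RD V E g p q = RD V E g q p"
          using symm_BL[of V E g] symm_RD[of V E g] unfolding symm_def by blast+
        have s2: "Bm u v (BL V E f) p u = Bm u v (BL V E f) u p" "Rm u v (BL V E f) (RD V E f) p u = Rm u v (BL V E f) (RD V E f) u p"
          using pu unfolding Bm_def Rm_def by simp_all
        show ?thesis using m True s1 s2 by simp
      next
        case False
        have b: "BL V E g p q \<longleftrightarrow> BL V E f p q"
          by (rule BL_mo[OF fo[OF pu pv(1)] fo[OF False pv(2)]])
        have a: "ADJ V E g p q \<longleftrightarrow> ADJ V E f p q"
          by (rule ADJ_mo[OF fo[OF pu pv(1)] fo[OF False pv(2)]])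
        show ?thesis using a b False pu unfolding Bm_def Rm_def RD_def by simp
      qed
    qed
  qed
  have "contract (Q V E f) u v u = mk ((f ` V - {u,v}) \<union> {u}) (Bm u v (BL V E f)) (Rm u v (BL V E f) (RD V E f))"
    unfolding Q_def using assms by (intro contract_mk) (auto simp: symm_BL symm_RD)
  also have "\<dots> = mk (g ` V) (BL V E g) (RD V E g)"
  proof (rule mk_cong)
    show "f ` V - {u, v} \<union> {u} = g ` V" using img by simp
    fix p q assume "p \<in> f ` V - {u, v} \<union> {u}" "q \<in> f ` V - {u, v} \<union> {u}" "p \<noteq> q"
    then have "p \<in> g ` V" "q \<in> g ` V" "p \<noteq> q" using img by auto
    from eqs[OF this] show "Bm u v (BL V E f) p q = BL V E g p q" "Rm u v (BL V E f) (RD V E f) p q = RD V E g p q"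
      by auto
  qed
  finally show ?thesis unfolding g_def Q_def .
qed

lemma Q_graph:
  assumes "is_graph G" "\<And>x. x \<in> verts G \<Longrightarrow> f x = x"
  shows "Q (verts G) (black G) f = G"
proof -
  let ?V = "verts G" and ?E = "black G"
  have Qid: "Q ?V ?E f = Q ?V ?E id" using assms(2) by (intro Q_cong) auto
  have wf: "\<forall>e\<in>?E. e \<subseteq> ?V \<and> card e = 2" "red G = {}"
    using assms(1) unfolding is_graph_def wf_trigraph_def by auto
  have bl: "BL ?V ?E id p q \<longleftrightarrow> {p,q} \<in> ?E" if "p \<in> ?V" "q \<in> ?V" for p q
    unfolding BL_def using that by auto
  have adj: "ADJ ?V ?E id p q \<longleftrightarrow> {p,q} \<in> ?E" if "p \<in> ?V" "q \<in> ?V" for p q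
    unfolding ADJ_def using that by auto
  have B: "{{p,q}|p q. p\<in>?V \<and> q\<in>?V \<and> p\<noteq>q \<and> BL ?V ?E id p q} = ?E"
  proof
    show "?E \<subseteq> {{p,q}|p q. p\<in>?V \<and> q\<in>?V \<and> p\<noteq>q \<and> BL ?V ?E id p q}"
    proof
      fix e assume e: "e \<in> ?E"
      then have c2: "card e = 2" and sub: "e \<subseteq> ?V" using wf(1) by auto
      obtain x y where xy: "e = {x,y}" "x \<noteq> y" using c2 card_2_iff by metis
      have xyV: "x \<in> ?V" "y \<in> ?V" using sub xy(1) by auto
      have "BL ?V ?E id x y" using bl[OF xyV] e xy(1) by simp
      then show "e \<in> {{p,q}|p q. p\<in>?V \<and> q\<in>?V \<and> p\<noteq>q \<and> BL ?V ?E id p q}"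
        using xy xyV by blast
    qed
    show "{{p,q}|p q. p\<in>?V \<and> q\<in>?V \<and> p\<noteq>q \<and> BL ?V ?E id p q} \<subseteq> ?E"
    proof
      fix e assume "e \<in> {{p,q}|p q. p\<in>?V \<and> q\<in>?V \<and> p\<noteq>q \<and> BL ?V ?E id p q}"
      then obtain p q where pq: "e = {p,q}" "p\<in>?V" "q\<in>?V" "BL ?V ?E id p q" by blast
      then show "e \<in> ?E" using bl[OF pq(2,3)] by simp
    qed
  qed
  have R: "{{p,q}|p q. p\<in>?V \<and> q\<in>?V \<and> p\<noteq>q \<and> RD ?V ?E id p q} = {}"
  proof -
    have "\<not> RD ?V ?E id p q" if "p\<in>?V" "q\<in>?V" for p q
      using bl[OF that] adj[OF that] unfolding RD_def by simp
    then show ?thesis by blast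
  qed
  have iV: "id ` ?V = ?V" by simp
  have "Q ?V ?E id = (?V, ?E, red G)"
    unfolding Q_def mk_def iV B R wf(2) by (rule refl)
  also have "\<dots> = G" by (simp add: verts_def black_def red_def)
  finally show ?thesis using Qid by simp
qed

lemma red_degree_le2:
  assumes "\<And>y. {w,y} \<in> red H \<Longrightarrow> y = A \<or> y = B"
  shows "red_degree H w \<le> 2"
proof -
  have "{y \<in> verts H. {w, y} \<in> red H} \<subseteq> {A,B}" using assms by auto
  then have "red_degree H w \<le> card {A,B}" unfolding red_degree_def by (intro card_mono) auto
  also have "\<dots> \<le> 2" by (simp add: card_insert_if)
  finally show ?thesis .
qed

definition good :: "'a trigraph \<Rightarrow> bool" where
  "good H \<longleftrightarrow> (\<exists>Hs. length Hs = card (verts H) \<and> Hs \<noteq> [] \<and> Hs ! 0 = H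
     \<and> (\<forall>i < length Hs. is_d_trigraph 2 (Hs ! i))
     \<and> card (verts (last Hs)) = 1
     \<and> (\<forall>i. Suc i < length Hs \<longrightarrow> contraction_step (Hs ! i) (Hs ! Suc i)))"

lemma good_base: "is_d_trigraph 2 H \<Longrightarrow> card (verts H) = 1 \<Longrightarrow> good H"
  unfolding good_def by (rule exI[of _ "[H]"]) auto

lemma card_contract:
  assumes "wf_trigraph H" "contraction_step H H'"
  shows "card (verts H) = Suc (card (verts H'))"
proof -
  obtain u v z where uv: "u \<in> verts H" "v \<in> verts H" "u \<noteq> v" "z \<notin> verts H - {u, v}" "H' = contract H u v z"
    using assms(2) unfolding contraction_step_def by blast
  have fin: "finite (verts H)" using assms(1) unfolding wf_trigraph_def by simp
  have "verts H' = (verts H - {u,v}) \<union> {z}" using uv(5) unfolding contract_def Let_def verts_def by simp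
  then have "card (verts H') = Suc (card (verts H - {u,v}))" using uv(4) fin by simp
  moreover have "card {u,v} \<le> card (verts H)" using uv(1-3) fin by (intro card_mono) auto
  moreover have "card (verts H - {u,v}) = card (verts H) - card {u,v}"
    using uv(1-3) fin by (intro card_Diff_subset) auto
  moreover have "card {u,v} = 2" using uv(3) by simp
  ultimately show ?thesis by simp
qed

lemma good_step:
  assumes "is_d_trigraph 2 H" "contraction_step H H'" "good H'"
  shows "good H"
proof -
  obtain Hs where Hs: "length Hs = card (verts H')" "Hs \<noteq> []" "Hs ! 0 = H'"
     "\<forall>i < length Hs. is_d_trigraph 2 (Hs ! i)" "card (verts (last Hs)) = 1"
     "\<forall>i. Suc i < length Hs \<longrightarrow> contraction_step (Hs ! i) (Hs ! Suc i)"
    using assms(3) unfolding good_def by blast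
  have c: "card (verts H) = Suc (card (verts H'))"
    using card_contract assms(1,2) unfolding is_d_trigraph_def by blast
  show ?thesis unfolding good_def
  proof (rule exI[of _ "H # Hs"], intro conjI allI impI)
    show "length (H # Hs) = card (verts H)" using Hs(1) c by simp
    show "card (verts (last (H # Hs))) = 1" using Hs(2,5) by simp
    fix i
    show "i < length (H # Hs) \<Longrightarrow> is_d_trigraph 2 ((H # Hs) ! i)"
      using Hs(4) assms(1) by (cases i) auto
    show "Suc i < length (H # Hs) \<Longrightarrow> contraction_step ((H # Hs) ! i) ((H # Hs) ! Suc i)"
      using Hs(3,6) assms(2) by (cases i) auto
  qed auto
qed



locale U =
  fixes V :: "'a set" and E :: "'a set set" and a :: "'a \<Rightarrow> real"
  assumes finV: "finite V" and neV: "V \<noteq> {}"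
  and adjE: "\<And>x y. x\<in>V \<Longrightarrow> y\<in>V \<Longrightarrow> x\<noteq>y \<Longrightarrow> {x,y}\<in>E \<longleftrightarrow> \<bar>a x - a y\<bar> \<le> 1"
begin

definition cell :: "'a \<Rightarrow> int" where "cell x = \<lfloor>a x\<rfloor>"
definition off :: "'a \<Rightarrow> real" where "off x = a x - of_int (cell x)"

lemma off_bounds: "0 \<le> off x" "off x < 1"
  unfolding off_def cell_def by linarith+

lemma a_eq: "a x = of_int (cell x) + off x" unfolding off_def by simp

lemma same_cell: "x\<in>V \<Longrightarrow> y\<in>V \<Longrightarrow> x\<noteq>y \<Longrightarrow> cell x = cell y \<Longrightarrow> {x,y}\<in>E"
  using adjE a_eq[of x] a_eq[of y] off_bounds[of x] off_bounds[of y] by auto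

lemma far_cell: assumes "x\<in>V" "y\<in>V" "cell x + 2 \<le> cell y" shows "{x,y}\<notin>E"
proof -
  have "x \<noteq> y" using assms by auto
  moreover have "real_of_int (cell x) + 2 \<le> of_int (cell y)" using assms(3) by linarith
  ultimately show ?thesis using adjE[OF assms(1,2)] a_eq[of x] a_eq[of y] off_bounds[of x] off_bounds[of y] by auto
qed

lemma next_cell: assumes "x\<in>V" "y\<in>V" "cell y = cell x + 1" shows "{x,y}\<in>E \<longleftrightarrow> off y \<le> off x"
proof -
  have "x \<noteq> y" using assms by auto
  moreover have "real_of_int (cell y) = of_int (cell x) + 1" using assms(3) by simp
  ultimately show ?thesis using adjE[OF assms(1,2)] a_eq[of x] a_eq[of y] off_bounds[of x] off_bounds[of y] by auto
qed

definition rep :: "int \<Rightarrow> 'a" where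
  "rep c = (SOME r. r\<in>V \<and> cell r = c \<and> (\<forall>y\<in>V. cell y = c \<longrightarrow> off r \<le> off y))"

lemma rep: assumes "c \<in> cell ` V"
  shows "rep c \<in> V" "cell (rep c) = c" "\<And>y. y\<in>V \<Longrightarrow> cell y = c \<Longrightarrow> off (rep c) \<le> off y"
proof -
  let ?A = "{y\<in>V. cell y = c}"
  have fin: "finite (off ` ?A)" using finV by simp
  have ne: "off ` ?A \<noteq> {}" using assms by auto
  obtain r where r: "r \<in> ?A" "off r = Min (off ` ?A)" using Min_in[OF fin ne] by auto
  have "\<forall>y\<in>V. cell y = c \<longrightarrow> off r \<le> off y" using r(2) Min_le[OF fin] by auto
  then have "\<exists>r. r\<in>V \<and> cell r = c \<and> (\<forall>y\<in>V. cell y = c \<longrightarrow> off r \<le> off y)" using r(1) by blast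
  from someI_ex[OF this] have "rep c\<in>V \<and> cell (rep c) = c \<and> (\<forall>y\<in>V. cell y = c \<longrightarrow> off (rep c) \<le> off y)"
    unfolding rep_def .
  then show "rep c \<in> V" "cell (rep c) = c" "\<And>y. y\<in>V \<Longrightarrow> cell y = c \<Longrightarrow> off (rep c) \<le> off y" by auto
qed

definition lek :: "'a \<Rightarrow> 'a \<Rightarrow> bool" where
  "lek q p \<longleftrightarrow> off q < off p \<or> (off q = off p \<and> cell p \<le> cell q)"

lemma exists_min: assumes "finite A" "A \<noteq> {}" shows "\<exists>x\<in>A. \<forall>p\<in>A. lek x p"
proof -
  define m where "m = Min (off ` A)"
  define A' where "A' = {y\<in>A. off y = m}"
  have m: "m \<in> off ` A" "\<And>y. y \<in> A \<Longrightarrow> m \<le> off y" using assms unfolding m_def by auto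
  have fA': "finite (cell ` A')" "cell ` A' \<noteq> {}" using assms m(1) unfolding A'_def by auto
  obtain x where x: "x \<in> A'" "cell x = Max (cell ` A')" using Max_in[OF fA'] by auto
  have "lek x p" if "p \<in> A" for p
  proof (cases "off p = m")
    case True
    then have "p \<in> A'" using that unfolding A'_def by simp
    then have "cell p \<le> cell x" using x(2) Max_ge[OF fA'(1)] by auto
    then show ?thesis using True x(1) unfolding lek_def A'_def by simp
  next
    case False
    then show ?thesis using m(2)[OF that] x(1) unfolding lek_def A'_def by auto
  qed
  then show ?thesis using x(1) unfolding A'_def by auto
qed

definition ph1 :: "'a set \<Rightarrow> ('a \<Rightarrow> 'a) \<Rightarrow> bool" where
  "ph1 S f \<longleftrightarrow> S \<subseteq> V \<and> (\<forall>c\<in>cell ` V. rep c \<in> S) \<and> (\<forall>x\<in>V. f x = (if x\<in>S then rep (cell x) else x))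
     \<and> (\<forall>q\<in>S. \<forall>p\<in>V-S. q \<noteq> rep (cell q) \<longrightarrow> lek q p)"

definition ph2 :: "int \<Rightarrow> ('a \<Rightarrow> 'a) \<Rightarrow> bool" where
  "ph2 m f \<longleftrightarrow> m \<in> cell ` V \<and> (\<forall>x\<in>V. f x = rep (max (cell x) m))"

lemma ph1_cell: "ph1 S f \<Longrightarrow> x \<in> V \<Longrightarrow> cell (f x) = cell x"
  unfolding ph1_def using rep(2) by auto

lemma ph1_notS: assumes ph: "ph1 S f" and p: "p \<notin> S" and x: "x \<in> V" and fx: "f x = p" shows "x = p"
proof -
  have fd: "\<forall>x\<in>V. f x = (if x\<in>S then rep (cell x) else x)" and reps: "\<forall>c\<in>cell ` V. rep c \<in> S"
    using ph unfolding ph1_def by auto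
  show ?thesis
  proof (cases "x \<in> S")
    case True
    then have "f x = rep (cell x)" using fd x by auto
    moreover have "rep (cell x) \<in> S" using reps x by auto
    ultimately show ?thesis using fx p by simp
  next
    case False
    then show ?thesis using fd x fx by auto
  qed
qed

lemma ph1_core:
  assumes ph: "ph1 S f" and V: "x1\<in>V" "x2\<in>V" "y1\<in>V" "y2\<in>V"
    and f: "f x1 = p" "f x2 = p" "f y1 = q" "f y2 = q" and c: "cell q = cell p + 1"
    and e1: "{x1,y1}\<in>E" and e2: "{x2,y2}\<notin>E"
  shows "p \<in> S \<and> q \<in> S"
proof -
  have cx: "cell x1 = cell p" "cell x2 = cell p" "cell y1 = cell q" "cell y2 = cell q"
    using ph1_cell[OF ph V(1)] ph1_cell[OF ph V(2)] ph1_cell[OF ph V(3)] ph1_cell[OF ph V(4)] f by simp_all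
  have o1: "off y1 \<le> off x1" using next_cell[of x1 y1] V e1 cx c by simp
  have o2: "off x2 < off y2" using next_cell[of x2 y2] V e2 cx c by simp
  have SV: "S \<subseteq> V" and reps: "\<forall>c\<in>cell ` V. rep c \<in> S" and fd: "\<forall>x\<in>V. f x = (if x\<in>S then rep (cell x) else x)"
    and lk: "\<forall>q\<in>S. \<forall>p\<in>V-S. q \<noteq> rep (cell q) \<longrightarrow> lek q p" using ph unfolding ph1_def by auto
  have pS: "p \<in> S"
  proof (rule ccontr)
    assume np: "p \<notin> S"
    then have xx: "x1 = p" "x2 = p" using ph1_notS[OF ph np] V f by auto
    have qS: "q \<in> S"
    proof (rule ccontr)
      assume "q \<notin> S"
      then have "y1 = q" "y2 = q" using ph1_notS[OF ph] V f by auto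
      then show False using o1 o2 xx by simp
    qed
    have y2S: "y2 \<in> S"
    proof (rule ccontr)
      assume "y2 \<notin> S" then have "f y2 = y2" using fd V(4) by simp
      then show False using f(4) qS \<open>y2 \<notin> S\<close> by simp
    qed
    show False
    proof (cases "y2 = rep (cell y2)")
      case True
      have cy: "cell y2 \<in> cell ` V" using V(4) by blast
      have "off (rep (cell y2)) \<le> off y1" using rep(3)[OF cy V(3)] cx by simp
      then have "off y2 \<le> off y1" using True by simp
      then show False using o1 o2 xx by simp
    next
      case False
      then have "lek y2 p" using lk y2S np xx V by auto
      then show False using o2 xx cx c unfolding lek_def by auto
    qed
  qed
  have qS: "q \<in> S"
  proof (rule ccontr)
    assume nq: "q \<notin> S"
    then have yy: "y1 = q" "y2 = q" using ph1_notS[OF ph nq] V f by auto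
    have x1S: "x1 \<in> S"
    proof (rule ccontr)
      assume "x1 \<notin> S" then have "f x1 = x1" using fd V(1) by simp
      then show False using f(1) pS \<open>x1 \<notin> S\<close> by simp
    qed
    show False
    proof (cases "x1 = rep (cell x1)")
      case True
      have cy: "cell x1 \<in> cell ` V" using V(1) by blast
      have "off (rep (cell x1)) \<le> off x2" using rep(3)[OF cy V(2)] cx by simp
      then have "off x1 \<le> off x2" using True by simp
      then show False using o1 o2 yy by simp
    next
      case False
      then have "lek x1 q" using lk x1S nq yy V by auto
      then show False using o1 yy cx c unfolding lek_def by auto
    qed
  qed
  show ?thesis using pS qS by simp
qed

lemma fin_rep: assumes yr: "y = rep (cell y)" and c: "cell y = cell w + 1 \<or> cell w = cell y + 1"
  shows "y = rep (cell w + 1) \<or> y = rep (cell w - 1)"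
  using c
proof
  assume "cell y = cell w + 1"
  then have "rep (cell y) = rep (cell w + 1)" by simp
  then show ?thesis using yr by (intro disjI1) (rule trans)
next
  assume "cell w = cell y + 1"
  then have "rep (cell y) = rep (cell w - 1)" by simp
  then show ?thesis using yr by (intro disjI2) (rule trans)
qed

lemma ph1_red:
  assumes ph: "ph1 S f" and r: "{w,y} \<in> red (Q V E f)"
  shows "y = rep (cell w + 1) \<or> y = rep (cell w - 1)"
proof -
  have r': "w \<in> f ` V" "y \<in> f ` V" "w \<noteq> y" "ADJ V E f w y" "\<not> BL V E f w y"
    using r unfolding mem_red_Q by blast+
  obtain x1 y1 where a: "x1\<in>V" "y1\<in>V" "f x1 = w" "f y1 = y" "{x1,y1}\<in>E" using r'(4) unfolding ADJ_def by blast
  obtain x2 y2 where b: "x2\<in>V" "y2\<in>V" "f x2 = w" "f y2 = y" "{x2,y2}\<notin>E" using r'(5) unfolding BL_def by blast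
  have cx: "cell x1 = cell w" "cell x2 = cell w" "cell y1 = cell y" "cell y2 = cell y"
    using ph1_cell[OF ph a(1)] ph1_cell[OF ph b(1)] ph1_cell[OF ph a(2)] ph1_cell[OF ph b(2)] a(3,4) b(3,4) by simp_all
  have ne: "x2 \<noteq> y2" using b r'(3) by auto
  have c: "cell y = cell w + 1 \<or> cell w = cell y + 1"
  proof -
    have "cell y \<noteq> cell w" using same_cell[OF b(1,2) ne] b(5) cx by auto
    moreover have "\<not> cell w + 2 \<le> cell y" using far_cell[OF a(1,2)] a(5) cx by auto
    moreover have "\<not> cell y + 2 \<le> cell w" using far_cell[OF a(2,1)] a(5) cx by (auto simp: insert_commute)
    ultimately show ?thesis by linarith
  qed
  have a5: "{y1,x1}\<in>E" and b5: "{y2,x2}\<notin>E" using a(5) b(5) by (simp_all add: insert_commute)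
  from c have yS: "y \<in> S"
  proof
    assume cc: "cell y = cell w + 1"
    show ?thesis using ph1_core[OF ph a(1) b(1) a(2) b(2) a(3) b(3) a(4) b(4) cc a(5) b(5)] by blast
  next
    assume cc: "cell w = cell y + 1"
    show ?thesis using ph1_core[OF ph a(2) b(2) a(1) b(1) a(4) b(4) a(3) b(3) cc a5 b5] by blast
  qed
  have fd: "\<forall>x\<in>V. f x = (if x\<in>S then rep (cell x) else x)" using ph unfolding ph1_def by blast
  have y1S: "y1 \<in> S"
  proof (rule ccontr)
    assume "y1 \<notin> S" then have "f y1 = y1" using fd a(2) by simp
    then show False using a(4) yS \<open>y1 \<notin> S\<close> by simp
  qed
  have "f y1 = rep (cell y1)" using fd a(2) y1S by simp
  then have "y = rep (cell y1)" using a(4) by simp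
  then have "y = rep (cell y)" unfolding cx(3) .
  then show ?thesis using c by (rule fin_rep)
qed

lemma ph2_img: "ph2 m f \<Longrightarrow> x \<in> V \<Longrightarrow> max (cell x) m \<in> cell ` V \<and> cell (f x) = max (cell x) m \<and> f x = rep (cell (f x))"
proof -
  assume ph: "ph2 m f" and x: "x \<in> V"
  have mV: "m \<in> cell ` V" and fd: "f x = rep (max (cell x) m)" using ph x unfolding ph2_def by auto
  have c: "max (cell x) m \<in> cell ` V"
  proof (cases "cell x \<le> m")
    case True then show ?thesis using mV by (simp add: max_absorb2)
  next
    case False then show ?thesis using x by (simp add: max_absorb1)
  qed
  have "cell (f x) = max (cell x) m" using rep(2)[OF c] fd by simp
  then show ?thesis using c fd by simp
qed

lemma ph2_red:
  assumes ph: "ph2 m f" and r: "{w,y} \<in> red (Q V E f)"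
  shows "y = rep (cell w + 1) \<or> y = rep (cell w - 1)"
proof -
  have r': "w \<in> f ` V" "y \<in> f ` V" "w \<noteq> y" "ADJ V E f w y"
    using r unfolding mem_red_Q by blast+
  obtain x1 y1 where a: "x1\<in>V" "y1\<in>V" "f x1 = w" "f y1 = y" "{x1,y1}\<in>E" using r'(4) unfolding ADJ_def by blast
  have j1: "cell (f x1) = max (cell x1) m" "f x1 = rep (cell (f x1))" using ph2_img[OF ph a(1)] by auto
  have j2: "cell (f y1) = max (cell y1) m" "f y1 = rep (cell (f y1))" using ph2_img[OF ph a(2)] by auto
  have i1: "cell w = max (cell x1) m" "w = rep (cell w)" using j1 unfolding a(3) .
  have i2: "cell y = max (cell y1) m" "y = rep (cell y)" using j2 unfolding a(4) .
  have "cell w \<noteq> cell y"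
  proof
    assume "cell w = cell y"
    then have "rep (cell w) = rep (cell y)" by simp
    then show False using i1(2) i2(2) r'(3) by simp
  qed
  then have c: "cell y = cell w + 1 \<or> cell w = cell y + 1"
  proof (cases "cell w < cell y")
    case True
    then have "cell y1 = cell y" "cell x1 \<le> cell w" using i1(1) i2(1) by auto
    then have "\<not> cell w + 2 \<le> cell y" using far_cell[OF a(1,2)] a(5) by auto
    then show ?thesis using True by linarith
  next
    case False
    then have gt: "cell w > cell y" using \<open>cell w \<noteq> cell y\<close> by linarith
    then have "cell x1 = cell w" "cell y1 \<le> cell y" using i1(1) i2(1) by auto
    then have "\<not> cell y + 2 \<le> cell w" using far_cell[OF a(2,1)] a(5) by (auto simp: insert_commute)
    then show ?thesis using gt by linarith
  qed
  show ?thesis using i2(2) c by (rule fin_rep)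
qed

lemma dtri: assumes "\<And>w y. {w,y} \<in> red (Q V E f) \<Longrightarrow> y = rep (cell w + 1) \<or> y = rep (cell w - 1)"
  shows "is_d_trigraph 2 (Q V E f)"
  unfolding is_d_trigraph_def
proof (intro conjI ballI)
  show "wf_trigraph (Q V E f)" by (rule wf_Q[OF finV])
  fix w show "red_degree (Q V E f) w \<le> 2" by (rule red_degree_le2) (erule assms)
qed

lemma ph2_good: "ph2 m f \<Longrightarrow> good (Q V E f)"
proof (induction "card {c\<in>cell ` V. m < c}" arbitrary: m f rule: less_induct)
  case less
  have dt: "is_d_trigraph 2 (Q V E f)" using dtri ph2_red[OF less.prems] by blast
  have mV: "m \<in> cell ` V" and fd: "\<forall>x\<in>V. f x = rep (max (cell x) m)" using less.prems unfolding ph2_def by auto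
  define C where "C = {c\<in>cell ` V. m < c}"
  have finC: "finite C" using finV unfolding C_def by simp
  show ?case
  proof (cases "C = {}")
    case True
    then have "\<forall>x\<in>V. f x = rep m" using fd unfolding C_def by force
    then have "f ` V = {rep m}" using neV by auto
    then show ?thesis using good_base[OF dt] by simp
  next
    case False
    define c' where "c' = Min C"
    have c': "c' \<in> cell ` V" "m < c'" "\<And>c. c \<in> cell ` V \<Longrightarrow> m < c \<Longrightarrow> c' \<le> c"
      using Min_in[OF finC False] Min_le[OF finC] unfolding c'_def C_def by auto
    define u where "u = rep c'"
    define v where "v = rep m"
    have uV: "u \<in> f ` V"
    proof -
      have "f (rep c') = rep c'" using fd rep[OF c'(1)] c'(2) by simp
      then show ?thesis using rep(1)[OF c'(1)] unfolding u_def by (metis image_eqI)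
    qed
    have vV: "v \<in> f ` V"
    proof -
      have "f (rep m) = rep m" using fd rep[OF mV] by simp
      then show ?thesis using rep(1)[OF mV] unfolding v_def by (metis image_eqI)
    qed
    have uv: "u \<noteq> v" using rep(2)[OF c'(1)] rep(2)[OF mV] c'(2) unfolding u_def v_def by auto
    define g where "g = (\<lambda>y. if f y = v then u else f y)"
    have ph2g: "ph2 c' g" unfolding ph2_def
    proof (intro conjI ballI)
      show "c' \<in> cell ` V" by (rule c'(1))
      fix y assume y: "y \<in> V"
      show "g y = rep (max (cell y) c')"
      proof (cases "cell y \<le> m")
        case True
        then show ?thesis using fd y c'(2) unfolding g_def v_def u_def by auto
      next
        case False
        then have "cell (f y) = cell y" using ph2_img[OF less.prems y] by auto
        then have "f y \<noteq> v" using False rep(2)[OF mV] unfolding v_def by auto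
        moreover have "c' \<le> cell y" using c'(3)[of "cell y"] y False by auto
        ultimately show ?thesis using fd y False unfolding g_def by auto
      qed
    qed
    have qg: "Q V E g = contract (Q V E f) u v u" using Q_merge[OF uV vV uv] unfolding g_def by simp
    have step: "contraction_step (Q V E f) (Q V E g)"
      using uV vV uv qg unfolding contraction_step_def verts_Q by blast
    have "{c\<in>cell ` V. c' < c} \<subset> C" using c' unfolding C_def by auto
    then have "card {c\<in>cell ` V. c' < c} < card C" using finC psubset_card_mono by blast
    then have "good (Q V E g)" using less.hyps ph2g unfolding C_def by blast
    then show ?thesis using good_step[OF dt step] by simp
  qed
qed

lemma ph1_good: "ph1 S f \<Longrightarrow> good (Q V E f)"
proof (induction "card (V - S)" arbitrary: S f rule: less_induct)
  case less
  have dt: "is_d_trigraph 2 (Q V E f)" using dtri ph1_red[OF less.prems] by blast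
  have SV: "S \<subseteq> V" and reps: "\<forall>c\<in>cell ` V. rep c \<in> S" and fd: "\<forall>x\<in>V. f x = (if x\<in>S then rep (cell x) else x)"
    and lk: "\<forall>q\<in>S. \<forall>p\<in>V-S. q \<noteq> rep (cell q) \<longrightarrow> lek q p" using less.prems unfolding ph1_def by auto
  show ?case
  proof (cases "S = V")
    case True
    define m0 where "m0 = Min (cell ` V)"
    have m0: "m0 \<in> cell ` V" "\<And>x. x \<in> V \<Longrightarrow> m0 \<le> cell x" using finV neV unfolding m0_def by auto
    have "ph2 m0 f" unfolding ph2_def using m0 fd True by (auto simp: max_absorb1)
    then show ?thesis by (rule ph2_good)
  next
    case False
    then have ne: "V - S \<noteq> {}" using SV by auto
    obtain x where x: "x \<in> V - S" "\<And>p. p \<in> V - S \<Longrightarrow> lek x p" using exists_min[OF _ ne] finV by auto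
    have cx: "cell x \<in> cell ` V" using x(1) by auto
    define u where "u = rep (cell x)"
    have uS: "u \<in> S" using reps cx unfolding u_def by auto
    have uv: "u \<noteq> x" using uS x(1) by auto
    have uV: "u \<in> f ` V"
    proof -
      have "f u = u" using fd uS SV rep(2)[OF cx] unfolding u_def by auto
      then show ?thesis using uS SV by (metis image_eqI subsetD)
    qed
    have vV: "x \<in> f ` V" using fd x(1) by (metis DiffD1 DiffD2 image_eqI)
    define g where "g = (\<lambda>y. if f y = x then u else f y)"
    have ph1g: "ph1 (insert x S) g" unfolding ph1_def
    proof (intro conjI ballI impI)
      show "insert x S \<subseteq> V" using SV x(1) by auto
      fix c assume "c \<in> cell ` V" then show "rep c \<in> insert x S" using reps by auto
    next
      fix y assume y: "y \<in> V"
      show "g y = (if y \<in> insert x S then rep (cell y) else y)"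
      proof (cases "y \<in> S")
        case True
        then have "f y = rep (cell y)" "rep (cell y) \<in> S" using fd y reps by auto
        then show ?thesis using True x(1) unfolding g_def by auto
      next
        case False
        then show ?thesis using fd y unfolding g_def u_def by auto
      qed
    next
      fix q p assume q: "q \<in> insert x S" and p: "p \<in> V - insert x S" and qr: "q \<noteq> rep (cell q)"
      show "lek q p"
      proof (cases "q = x")
        case True then show ?thesis using x(2) p by auto
      next
        case False then show ?thesis using lk q p qr by auto
      qed
    qed
    have qg: "Q V E g = contract (Q V E f) u x u" using Q_merge[OF uV vV uv] unfolding g_def by simp
    have step: "contraction_step (Q V E f) (Q V E g)"
      using uV vV uv qg unfolding contraction_step_def verts_Q by blast
    have "card (V - insert x S) < card (V - S)"
      using x(1) finV by (metis Diff_insert card_Diff1_less finite_Diff)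
    then have "good (Q V E g)" using less.hyps ph1g by blast
    then show ?thesis using good_step[OF dt step] by simp
  qed
qed

lemma good_id: "good (Q V E (\<lambda>x. x))"
proof -
  define S0 where "S0 = rep ` (cell ` V)"
  define f0 where "f0 = (\<lambda>x. if x \<in> S0 then rep (cell x) else x)"
  have fid: "f0 x = x" for x
  proof (cases "x \<in> S0")
    case True
    then obtain c where c: "c \<in> cell ` V" "x = rep c" unfolding S0_def by auto
    then show ?thesis using rep(2)[OF c(1)] True unfolding f0_def by simp
  qed (simp add: f0_def)
  have "ph1 S0 f0" unfolding ph1_def
  proof (intro conjI ballI impI)
    show "S0 \<subseteq> V" unfolding S0_def using rep(1) by auto
    show "\<And>c. c \<in> cell ` V \<Longrightarrow> rep c \<in> S0" unfolding S0_def by auto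
    show "\<And>x. x \<in> V \<Longrightarrow> f0 x = (if x \<in> S0 then rep (cell x) else x)" unfolding f0_def by simp
    fix q p assume "q \<in> S0" "p \<in> V - S0" "q \<noteq> rep (cell q)"
    then show "lek q p" unfolding S0_def using rep(2) by auto
  qed
  then have "good (Q V E f0)" by (rule ph1_good)
  moreover have "f0 = (\<lambda>x. x)" using fid by auto
  ultimately show ?thesis by simp
qed

end



lemma interval_meet: assumes "(l::real) \<ge> 0"
  shows "{s..s+l} \<inter> {t..t+l} \<noteq> {} \<longleftrightarrow> \<bar>s - t\<bar> \<le> l"
proof
  assume "{s..s+l} \<inter> {t..t+l} \<noteq> {}"
  then obtain z where "z \<in> {s..s+l}" "z \<in> {t..t+l}" by blast
  then show "\<bar>s - t\<bar> \<le> l" by auto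
next
  assume h: "\<bar>s - t\<bar> \<le> l"
  have "max s t \<in> {s..s+l} \<inter> {t..t+l}" using h assms by (auto simp: max_def)
  then show "{s..s+l} \<inter> {t..t+l} \<noteq> {}" by blast
qed

lemma rescale:
  fixes a :: "'a \<Rightarrow> real"
  assumes "l \<ge> 0" "finite V"
  shows "\<exists>a' :: 'a \<Rightarrow> real. \<forall>x\<in>V. \<forall>y\<in>V. (\<bar>a x - a y\<bar> \<le> l \<longleftrightarrow> \<bar>a' x - a' y\<bar> \<le> 1)"
proof (cases "l > 0")
  case True
  have "\<bar>a x - a y\<bar> \<le> l \<longleftrightarrow> \<bar>a x / l - a y / l\<bar> \<le> 1" for x y
  proof -
    have "a x / l - a y / l = (a x - a y) / l" by (simp add: diff_divide_distrib)
    then have "\<bar>a x / l - a y / l\<bar> = \<bar>a x - a y\<bar> / l" using True by simp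
    moreover have "\<bar>a x - a y\<bar> / l \<le> 1 \<longleftrightarrow> \<bar>a x - a y\<bar> \<le> l" using True by (simp add: pos_divide_le_eq)
    ultimately show ?thesis by simp
  qed
  then show ?thesis by (intro exI[of _ "\<lambda>x. a x / l"] ballI) simp
next
  case False
  then have l0: "l = 0" using assms(1) by simp
  define D where "D = (\<lambda>(x,y). \<bar>a x - a y\<bar>) ` {(x,y). x \<in> V \<and> y \<in> V \<and> a x \<noteq> a y}"
  have finD: "finite D" unfolding D_def
    by (rule finite_imageI, rule finite_subset[of _ "V \<times> V"]) (use assms(2) in auto)
  define \<delta> where "\<delta> = (if D = {} then 1 else Min D)"
  have Dpos: "\<And>d. d \<in> D \<Longrightarrow> d > 0" unfolding D_def by auto
  have dpos: "\<delta> > 0" unfolding \<delta>_def using Min_in[OF finD] Dpos by auto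
  have dle: "\<And>d. d \<in> D \<Longrightarrow> \<delta> \<le> d" unfolding \<delta>_def using Min_le[OF finD] by auto
  have "\<bar>a x - a y\<bar> \<le> l \<longleftrightarrow> \<bar>2 * a x / \<delta> - 2 * a y / \<delta>\<bar> \<le> 1" if "x \<in> V" "y \<in> V" for x y
  proof (cases "a x = a y")
    case True then show ?thesis using l0 by simp
  next
    case False
    then have "\<bar>a x - a y\<bar> \<in> D" unfolding D_def
      by (intro image_eqI[of _ _ "(x,y)"]) (use that in auto)
    then have d: "\<delta> \<le> \<bar>a x - a y\<bar>" by (rule dle)
    have e0: "2 * a x / \<delta> - 2 * a y / \<delta> = 2 * (a x - a y) / \<delta>" by (simp add: diff_divide_distrib right_diff_distrib)
    have e1: "\<bar>2 * a x / \<delta> - 2 * a y / \<delta>\<bar> = \<bar>2 * (a x - a y)\<bar> / \<bar>\<delta>\<bar>" unfolding e0 by (rule abs_divide)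
    have e2: "\<bar>2 * (a x - a y)\<bar> = 2 * \<bar>a x - a y\<bar>" by (simp only: abs_mult)
    have e: "\<bar>2 * a x / \<delta> - 2 * a y / \<delta>\<bar> = 2 * \<bar>a x - a y\<bar> / \<delta>"
      unfolding e1 e2 using dpos by simp
    have "2 * \<delta> \<le> 2 * \<bar>a x - a y\<bar>" using d by simp
    then have "2 \<le> 2 * \<bar>a x - a y\<bar> / \<delta>" using dpos by (simp add: pos_le_divide_eq)
    then show ?thesis using e False l0 by simp
  qed
  then show ?thesis by (intro exI[of _ "\<lambda>x. 2 * a x / \<delta>"] ballI) simp
qed

theorem mainTheorem5:
  fixes G :: "'a trigraph"
  assumes "unit_interval_graph G"
  shows "twin_width G \<le> 2"
proof -
  have g: "is_graph G" "verts G \<noteq> {}" using assms unfolding unit_interval_graph_def by auto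
  have "\<exists>(a :: 'a \<Rightarrow> real) (l :: real). l \<ge> 0 \<and>
        (\<forall>x \<in> verts G. \<forall>y \<in> verts G. x \<noteq> y \<longrightarrow>
           ({x, y} \<in> black G \<longleftrightarrow> {a x .. a x + l} \<inter> {a y .. a y + l} \<noteq> {}))"
    using assms unfolding unit_interval_graph_def by auto
  then obtain a :: "'a \<Rightarrow> real" and l :: real where l: "l \<ge> 0"
    and adj: "\<forall>x \<in> verts G. \<forall>y \<in> verts G. x \<noteq> y \<longrightarrow>
           ({x, y} \<in> black G \<longleftrightarrow> {a x .. a x + l} \<inter> {a y .. a y + l} \<noteq> {})"
    by blast
  have fin: "finite (verts G)" using g(1) unfolding is_graph_def wf_trigraph_def by simp
  obtain a' :: "'a \<Rightarrow> real" where a': "\<forall>x\<in>verts G. \<forall>y\<in>verts G. (\<bar>a x - a y\<bar> \<le> l \<longleftrightarrow> \<bar>a' x - a' y\<bar> \<le> 1)"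
    using rescale[OF l fin, of a] by blast
  have adj': "{x,y} \<in> black G \<longleftrightarrow> \<bar>a' x - a' y\<bar> \<le> 1"
    if "x \<in> verts G" "y \<in> verts G" "x \<noteq> y" for x y
    using adj a' interval_meet[OF l] that by simp
  interpret U "verts G" "black G" a'
    by unfold_locales (use fin g(2) adj' in auto)
  have "good (Q (verts G) (black G) (\<lambda>x. x))" by (rule good_id)
  moreover have "Q (verts G) (black G) (\<lambda>x. x) = G" by (rule Q_graph[OF g(1)]) simp
  ultimately have "good G" by simp
  then obtain Hs where "is_d_sequence 2 G Hs" unfolding good_def is_d_sequence_def by blast
  then show ?thesis unfolding twin_width_def by (intro Least_le) blast
qed

end
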